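(* Let $p$ be prime, $\mathbb{F}=\mathbb{F}_p$, $K\ge1$, and let $y_{i,j}\in\mathbb{F}^N$ for $i=1,\dots,p-1$, $j=1,\dots,K$. Let $M=\{x\in\mathbb{F}^N:\ \langle x^i,y_{i,j}\rangle=0\text{ for all }i,j\}$. Let $f:\mathbb{F}^N\to\mathbb{F}$ be constant on $M$. Then $$\|f\|_{U^p}\ge\Big(\frac{|M|}{p^N}\Big)^2.$$
   Context: $x^i$ denotes the vector whose coordinates are the $i$-th powers of the coordinates of $x$, and $\langle u,v\rangle=\sum_{t=1}^Nu(t)v(t)$. For $f:\mathbb{F}^N\to\mathbb{F}$, $f_y(x)=f(x+y)-f(x)$, iterated derivatives $f_{y_1\dots y_k}=(f_{y_1\dots y_{k-1}})_{y_k}$, $e(a)=e^{2\pi ia/p}$, and $\|f\|_{U^k}=\big(\mathbb{E}_{x,y_1,\dots,y_k}e(f_{y_1\dots y_k}(x))\big)^{1/2^k}$. *)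

theory Defs
  imports "HOL-Analysis.Analysis" "Berlekamp_Zassenhaus.Finite_Field"
begin

text \<open>Vectors in F_p^N are modelled as 'p mod_ring ^ 'n, with p = CARD('p) prime
  and N = CARD('n).\<close>

definition vpow :: "'p::prime_card mod_ring ^ 'n \<Rightarrow> nat \<Rightarrow> 'p mod_ring ^ 'n" where
  "vpow x i = (\<chi> t. (x $ t) ^ i)"

definition vinner :: "'p::prime_card mod_ring ^ 'n \<Rightarrow> 'p mod_ring ^ 'n \<Rightarrow> 'p mod_ring" where
  "vinner u v = (\<Sum>t\<in>UNIV. u $ t * v $ t)"

definition echar :: "'p::prime_card mod_ring \<Rightarrow> complex" where
  "echar a = exp (2 * of_real pi * \<i> * of_int (to_int_mod_ring a) / of_nat CARD('p))"

fun gderiv :: "('v::ab_group_add \<Rightarrow> 'b::ab_group_add) \<Rightarrow> 'v list \<Rightarrow> 'v \<Rightarrow> 'b" where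
  "gderiv f [] = f"
| "gderiv f (y # ys) = gderiv (\<lambda>x. f (x + y) - f x) ys"

definition gowers_avg :: "nat \<Rightarrow> ('p::prime_card mod_ring ^ 'n::finite \<Rightarrow> 'p mod_ring) \<Rightarrow> complex" where
  "gowers_avg k f =
     (\<Sum>x\<in>UNIV. \<Sum>ys\<in>{ys. length ys = k}. echar (gderiv f ys x))
       / of_nat (CARD('p mod_ring ^ 'n) ^ (k + 1))"

definition gowers_norm :: "nat \<Rightarrow> ('p::prime_card mod_ring ^ 'n::finite \<Rightarrow> 'p mod_ring) \<Rightarrow> real" where
  "gowers_norm k f = (Re (gowers_avg k f)) powr (1 / 2 ^ k)"

end

theory Submission imports Defs begin

definition ee :: "nat \<Rightarrow> int \<Rightarrow> complex" where
  "ee p n = exp (2 * of_real pi * \<i> * of_int n / of_nat p)"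

lemma ee_add: "ee p (a + b) = ee p a * ee p b"
  unfolding ee_def by (simp add: exp_add[symmetric] add_divide_distrib algebra_simps)

lemma ee_mod: assumes "p > 0" shows "ee p (n mod int p) = ee p n"
proof -
  have "n = n mod int p + int p * (n div int p)" by simp
  then have "ee p n = ee p (n mod int p) * ee p (int p * (n div int p))"
    by (metis ee_add)
  moreover have "ee p (int p * (n div int p)) = 1"
    unfolding ee_def using assms
    by (simp add: field_simps) (metis exp_2pi_1_int mult.commute mult.left_commute)
  ultimately show ?thesis by simp
qed

lemma norm_ee: "norm (ee p n) = 1"
  unfolding ee_def by (simp add: norm_exp_eq_Re)

lemma ee_ne1: assumes "0 < n" "n < int p" shows "ee p n \<noteq> 1"
proof
  assume "ee p n = 1"
  then obtain k :: int where k: "Im (2 * of_real pi * \<i> * of_int n / of_nat p) = of_int (2*k) * pi"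
    unfolding ee_def exp_eq_1 by blast
  have "2 * pi * n / p = 2 * k * pi" using k by simp
  then have "real_of_int n = real p * k" using assms pi_gt_zero
    by (simp add: field_simps)
  then have "n = int p * k" by (metis of_int_eq_iff of_int_mult of_int_of_nat_eq)
  show False
  proof (cases "k \<le> 0")
    case True
    then have "int p * k \<le> 0" by (simp add: mult_nonneg_nonpos)
    then show False using assms \<open>n = int p * k\<close> by simp
  next
    case False
    then have "int p * k \<ge> int p * 1" by (intro mult_left_mono) auto
    then show False using assms \<open>n = int p * k\<close> by linarith
  qed
qed

lemma echar_ee: "echar a = ee CARD('p) (to_int_mod_ring (a :: 'p::prime_card mod_ring))"
  unfolding echar_def ee_def by simp

lemma echar_add: "echar (a + b :: 'p::prime_card mod_ring) = echar a * echar b"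
  unfolding echar_ee to_int_mod_ring_add by (simp add: ee_mod ee_add)

lemma echar_0: "echar (0 :: 'p::prime_card mod_ring) = 1"
  unfolding echar_ee by (simp add: ee_def)

lemma norm_echar: "norm (echar a) = 1"
  unfolding echar_def by (simp add: norm_exp_eq_Re)

lemma echar_cnj_mult: "echar (a :: 'p::prime_card mod_ring) * cnj (echar a) = 1"
  using norm_echar[of a] by (metis complex_norm_square of_real_1 power_one)

lemma echar_diff: "echar (a - b :: 'p::prime_card mod_ring) = echar a * cnj (echar b)"
proof -
  have "echar a = echar (a - b) * echar b" by (metis diff_add_cancel echar_add)
  then have "echar a * cnj (echar b) = echar (a - b) * (echar b * cnj (echar b))" by simp
  then show ?thesis using echar_cnj_mult[of b] by simp
qed

lemma echar_orth: "(\<Sum>b\<in>UNIV. echar (b * t :: 'p::prime_card mod_ring)) = (if t = 0 then of_nat CARD('p) else 0)"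
proof (cases "t = 0")
  case True then show ?thesis by (simp add: echar_0)
next
  case False
  define S where "S = (\<Sum>b\<in>UNIV. echar (b * t :: 'p::prime_card mod_ring))"
  have "echar t * S = (\<Sum>b\<in>UNIV. echar ((b + 1) * t))"
    unfolding S_def sum_distrib_left by (simp add: echar_add[symmetric] algebra_simps)
  also have "\<dots> = S" unfolding S_def
    by (rule sum.reindex_bij_witness[of _ "\<lambda>b. b - 1" "\<lambda>b. b + 1"]) auto
  finally have "(echar t - 1) * S = 0" by (simp add: algebra_simps)
  moreover have "echar t \<noteq> 1"
  proof -
    have r: "to_int_mod_ring t \<in> {0..<int CARD('p)}" using range_to_int_mod_ring by blast
    have nz: "to_int_mod_ring t \<noteq> 0" using False
      by (metis to_int_mod_ring_hom.hom_zero to_int_mod_ring_hom.injectivity)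
    have r0: "0 \<le> to_int_mod_ring t" and r1: "to_int_mod_ring t < int CARD('p)" using r by auto
    have pos: "0 < to_int_mod_ring t" using r0 nz by (metis order_le_neq_trans)
    show ?thesis unfolding echar_ee by (rule ee_ne1[OF pos r1])
  qed
  ultimately show ?thesis using False S_def by simp
qed


lemma gderiv_add: "gderiv (\<lambda>x. g x + h x) ys = (\<lambda>x. gderiv g ys x + gderiv h ys x)"
proof (induction ys arbitrary: g h)
  case Nil then show ?case by simp
next
  case (Cons y ys)
  have "gderiv (\<lambda>x. g x + h x) (y # ys) =
        gderiv (\<lambda>x. (g (x + y) - g x) + (h (x + y) - h x)) ys"
    by (simp add: algebra_simps)
  also have "\<dots> = (\<lambda>x. gderiv g (y # ys) x + gderiv h (y # ys) x)"
    using Cons by simp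
  finally show ?case .
qed

lemma gderiv_zero: "gderiv (\<lambda>x. 0) ys = (\<lambda>x. 0)"
  by (induction ys) auto

lemma gderiv_sum: "gderiv (\<lambda>x. \<Sum>i\<in>I. g i x) ys = (\<lambda>x. \<Sum>i\<in>I. gderiv (g i) ys x)"
proof (induction ys arbitrary: g)
  case Nil then show ?case by simp
next
  case (Cons y ys)
  have "gderiv (\<lambda>x. \<Sum>i\<in>I. g i x) (y # ys) =
        gderiv (\<lambda>x. \<Sum>i\<in>I. (\<lambda>i x. g i (x + y) - g i x) i x) ys"
    by (simp add: sum_subtractf)
  also have "\<dots> = (\<lambda>x. \<Sum>i\<in>I. gderiv (g i) (y # ys) x)"
    by (subst Cons) simp
  finally show ?case .
qed

lemma gderiv_cmult: "gderiv (\<lambda>x. c * g x) ys = (\<lambda>x. c * gderiv g ys x :: 'b::comm_ring)"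
proof (induction ys arbitrary: g)
  case Nil then show ?case by simp
next
  case (Cons y ys)
  have "gderiv (\<lambda>x. c * g x) (y # ys) = gderiv (\<lambda>x. c * (g (x + y) - g x)) ys"
    by (simp add: algebra_simps)
  then show ?case using Cons by simp
qed

lemma gderiv_append: "gderiv g (ys @ zs) = gderiv (gderiv g ys) zs"
  by (induction ys arbitrary: g) auto

definition lowdeg :: "nat \<Rightarrow> ('v::ab_group_add \<Rightarrow> 'b::ab_group_add) \<Rightarrow> bool" where
  "lowdeg d g \<longleftrightarrow> (\<forall>ys. length ys > d \<longrightarrow> gderiv g ys = (\<lambda>x. 0))"

lemma lowdeg_mono: "lowdeg d g \<Longrightarrow> d \<le> e \<Longrightarrow> lowdeg e g"
  unfolding lowdeg_def by auto

lemma lowdeg_sum: "(\<And>i. i \<in> I \<Longrightarrow> lowdeg d (g i)) \<Longrightarrow> lowdeg d (\<lambda>x. \<Sum>i\<in>I. g i x)"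
  unfolding lowdeg_def gderiv_sum by auto

lemma lowdeg_cmult: "lowdeg d g \<Longrightarrow> lowdeg d (\<lambda>x. c * g x :: 'b::comm_ring)"
  unfolding lowdeg_def gderiv_cmult by auto

lemma lowdeg_monomial: "lowdeg m (\<lambda>x::'a::comm_ring_1^'n. (x $ t) ^ m)"
proof (induction m rule: less_induct)
  case (less m)
  show ?case unfolding lowdeg_def
  proof (intro allI impI)
    fix ys :: "('a^'n) list" assume len: "m < length ys"
    then obtain z zs where ys: "ys = z # zs" by (cases ys) auto
    have bin: "(x $ t + z $ t) ^ m - (x $ t) ^ m =
       (\<Sum>k<m. (of_nat (m choose k) * (z $ t) ^ (m - k)) * (x $ t) ^ k)" for x :: "'a^'n"
      by (simp add: binomial_ring lessThan_Suc_atMost[symmetric] algebra_simps)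
    have "gderiv (\<lambda>x::'a^'n. (x $ t) ^ m) ys =
          gderiv (\<lambda>x. \<Sum>k<m. (of_nat (m choose k) * (z $ t) ^ (m - k)) * (x $ t) ^ k) zs"
      using ys bin by simp
    also have "\<dots> = (\<lambda>x. \<Sum>k<m. (of_nat (m choose k) * (z $ t) ^ (m - k)) *
                          gderiv (\<lambda>x. (x $ t) ^ k) zs x)"
      by (simp add: gderiv_sum gderiv_cmult)
    also have "\<dots> = (\<lambda>x. 0)"
    proof -
      have "gderiv (\<lambda>x::'a^'n. (x $ t) ^ k) zs = (\<lambda>x. 0)" if "k < m" for k
        using less[OF that] that len ys unfolding lowdeg_def by auto
      then show ?thesis by simp
    qed
    finally show "gderiv (\<lambda>x. (x $ t) ^ m) ys = (\<lambda>x. 0)" .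
  qed
qed


lemma finite_lenlists: "finite {ys :: 'v::finite list. length ys = k}"
  using finite_lists_length_eq[of "UNIV :: 'v set" k] by simp

lemma card_lenlists: "card {ys :: 'v::finite list. length ys = k} = CARD('v) ^ k"
  using card_lists_length_eq[of "UNIV :: 'v set" k] by simp

lemma sum_lenlists_Suc:
  "(\<Sum>ws\<in>{ws :: 'v::finite list. length ws = Suc k}. F ws) =
   (\<Sum>ys\<in>{ys. length ys = k}. \<Sum>z\<in>UNIV. F (ys @ [z]))"
proof -
  have "(\<Sum>ys\<in>{ys. length ys = k}. \<Sum>z\<in>UNIV. F (ys @ [z])) =
        (\<Sum>(ys, z)\<in>{ys :: 'v list. length ys = k} \<times> UNIV. F (ys @ [z]))"
    by (rule sum.cartesian_product)
  also have "\<dots> = (\<Sum>ws\<in>{ws :: 'v::finite list. length ws = Suc k}. F ws)"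
  proof (rule sum.reindex_bij_witness[of _ "\<lambda>ws. (butlast ws, last ws)" "\<lambda>(ys, z). ys @ [z]"])
    fix a :: "'v list" assume "a \<in> {ws. length ws = Suc k}"
    then show "(case (butlast a, last a) of (ys, z) \<Rightarrow> ys @ [z]) = a"
      by (cases a rule: rev_cases) auto
  qed auto
  finally show ?thesis ..
qed

definition SS :: "('p::prime_card mod_ring ^ 'n::finite \<Rightarrow> 'p mod_ring) \<Rightarrow> ('p mod_ring ^ 'n) list \<Rightarrow> complex" where
  "SS g ys = (\<Sum>x\<in>UNIV. echar (gderiv g ys x))"

definition AA :: "nat \<Rightarrow> ('p::prime_card mod_ring ^ 'n::finite \<Rightarrow> 'p mod_ring) \<Rightarrow> complex" where
  "AA k g = (\<Sum>x\<in>UNIV. \<Sum>ys\<in>{ys. length ys = k}. echar (gderiv g ys x))"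

lemma AA_eq: "AA k g = (\<Sum>ys\<in>{ys. length ys = k}. SS g ys)"
  unfolding AA_def SS_def by (rule sum.swap)

lemma sum_shift: "(\<Sum>z\<in>UNIV. F (x + z)) = (\<Sum>w\<in>UNIV. F w :: complex)" for x :: "'v::{finite,ab_group_add}"
  by (rule sum.reindex_bij_witness[of _ "\<lambda>w. w - x" "\<lambda>z. x + z"]) auto

lemma AA_Suc: "AA (Suc k) g = (\<Sum>ys\<in>{ys. length ys = k}. of_real ((cmod (SS g ys))\<^sup>2))"
proof -
  have "AA (Suc k) g = (\<Sum>ys\<in>{ys. length ys = k}. \<Sum>x\<in>UNIV. \<Sum>z\<in>UNIV.
           echar (gderiv g ys (x + z)) * cnj (echar (gderiv g ys x)))"
    unfolding AA_def sum_lenlists_Suc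
    by (subst sum.swap) (simp add: gderiv_append echar_diff)
  also have "\<dots> = (\<Sum>ys\<in>{ys. length ys = k}. SS g ys * cnj (SS g ys))"
  proof (rule sum.cong[OF refl])
    fix ys
    have "(\<Sum>x\<in>UNIV. \<Sum>z\<in>UNIV. echar (gderiv g ys (x + z)) * cnj (echar (gderiv g ys x)))
        = (\<Sum>x\<in>UNIV. SS g ys * cnj (echar (gderiv g ys x)))"
      unfolding SS_def sum_distrib_right[symmetric] sum_shift[of "\<lambda>w. echar (gderiv g ys w)"] ..
    also have "\<dots> = SS g ys * cnj (SS g ys)"
      by (simp add: sum_distrib_left SS_def)
    finally show "(\<Sum>x\<in>UNIV. \<Sum>z\<in>UNIV. echar (gderiv g ys (x + z)) * cnj (echar (gderiv g ys x)))
        = SS g ys * cnj (SS g ys)" .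
  qed
  also have "\<dots> = (\<Sum>ys\<in>{ys. length ys = k}. of_real ((cmod (SS g ys))\<^sup>2))"
    by (rule sum.cong[OF refl]) (rule complex_norm_square[symmetric])
  finally show ?thesis .
qed

lemma AA_Suc_ineq:
  "(cmod (AA k g))\<^sup>2 \<le> real (CARD('p::prime_card mod_ring ^ 'n::finite)) ^ k * Re (AA (Suc k) (g :: 'p mod_ring ^ 'n \<Rightarrow> _))"
proof -
  let ?L = "{ys :: ('p mod_ring ^ 'n) list. length ys = k}"
  have "cmod (AA k g) \<le> (\<Sum>ys\<in>?L. cmod (SS g ys))"
    unfolding AA_eq by (rule norm_sum)
  then have "(cmod (AA k g))\<^sup>2 \<le> (\<Sum>ys\<in>?L. cmod (SS g ys))\<^sup>2"
    by (simp add: power_mono)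
  also have "\<dots> \<le> (\<Sum>ys\<in>?L. (cmod (SS g ys))\<^sup>2) * card ?L"
    by (rule sum_squared_le_sum_of_squares)
  also have "\<dots> = real (CARD('p mod_ring ^ 'n)) ^ k * Re (AA (Suc k) g)"
    unfolding AA_Suc card_lenlists by simp
  finally show ?thesis .
qed

lemma AA_Suc_real: "Im (AA (Suc k) g) = 0"
  unfolding AA_Suc by simp

lemma avg_step:
  "Re (gowers_avg (Suc k) g) \<ge> (cmod (gowers_avg k g))\<^sup>2"
proof -
  define V where "V = real (CARD('a::prime_card mod_ring ^ 'b::finite))"
  have V: "V > 0" unfolding V_def by simp
  have ga: "gowers_avg k g = AA k g / of_real (V ^ (k + 1))" for k and g :: "'a mod_ring ^ 'b \<Rightarrow> _"
    unfolding gowers_avg_def AA_def V_def by simp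
  have "(cmod (gowers_avg k g))\<^sup>2 = (cmod (AA k g))\<^sup>2 / (V ^ (k+1))\<^sup>2"
    unfolding ga using V by (simp add: norm_divide power_divide norm_mult norm_power)
  also have "\<dots> \<le> V ^ k * Re (AA (Suc k) g) / (V ^ (k+1))\<^sup>2"
    using AA_Suc_ineq[of k g] V unfolding V_def by (intro divide_right_mono) auto
  also have "\<dots> = Re (AA (Suc k) g) / V ^ (Suc k + 1)"
    using V by (simp add: field_simps power2_eq_square)
  also have "\<dots> = Re (gowers_avg (Suc k) g)"
    unfolding ga by (simp add: Re_divide_of_real)
  finally show ?thesis .
qed

lemma avg_pow: "cmod (gowers_avg k g) \<ge> cmod (gowers_avg 0 g) ^ (2 ^ k)"
proof (induction k)
  case 0 then show ?case by simp
next
  case (Suc k)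
  have "cmod (gowers_avg 0 g) ^ (2 ^ Suc k) = (cmod (gowers_avg 0 g) ^ (2 ^ k))\<^sup>2"
    by (simp add: power_mult[symmetric] mult.commute)
  also have "\<dots> \<le> (cmod (gowers_avg k g))\<^sup>2"
    using Suc by (intro power_mono) auto
  also have "\<dots> \<le> Re (gowers_avg (Suc k) g)" by (rule avg_step)
  also have "\<dots> \<le> cmod (gowers_avg (Suc k) g)" by (rule complex_Re_le_cmod)
  finally show ?case .
qed

lemma avg_pow_Re: "Re (gowers_avg (Suc k) g) \<ge> cmod (gowers_avg 0 g) ^ (2 ^ Suc k)"
proof -
  have "cmod (gowers_avg 0 g) ^ (2 ^ Suc k) = (cmod (gowers_avg 0 g) ^ (2 ^ k))\<^sup>2"
    by (simp add: power_mult[symmetric] mult.commute)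
  also have "\<dots> \<le> (cmod (gowers_avg k g))\<^sup>2"
    using avg_pow[of g k] by (intro power_mono) auto
  also have "\<dots> \<le> Re (gowers_avg (Suc k) g)" by (rule avg_step)
  finally show ?thesis .
qed

lemma avg_0: "gowers_avg 0 (g :: 'p::prime_card mod_ring ^ 'n::finite \<Rightarrow> _) = (\<Sum>x\<in>UNIV. echar (g x)) / of_nat CARD('p mod_ring ^ 'n)"
proof -
  have "{ys :: ('p mod_ring ^ 'n) list. length ys = 0} = {[]}" by auto
  then show ?thesis unfolding gowers_avg_def by simp
qed

lemma avg_shift: assumes "lowdeg k \<psi>"
  shows "gowers_avg (Suc k) (\<lambda>x. g x + \<psi> x) = gowers_avg (Suc k) g"
proof -
  have "gderiv (\<lambda>x. g x + \<psi> x) ys = gderiv g ys" if "length ys = Suc k" for ys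
    using assms that unfolding lowdeg_def gderiv_add by auto
  then show ?thesis unfolding gowers_avg_def by (intro arg_cong2[where f="(/)"] sum.cong refl) auto
qed


lemma echar_sum: "finite I \<Longrightarrow> echar (\<Sum>q\<in>I. h q :: 'p::prime_card mod_ring) = (\<Prod>q\<in>I. echar (h q))"
  by (induction I rule: finite_induct) (auto simp: echar_0 echar_add)

lemma powr_pow_root: assumes "(d::real) \<ge> 0" "n > 0" shows "(d ^ n) powr (1 / real n) = d"
proof (cases "d = 0")
  case True then show ?thesis using assms by simp
next
  case False
  then have "d > 0" using assms by simp
  then show ?thesis using assms by (simp add: powr_realpow[symmetric] powr_powr)
qed

theorem proposition2p8:
  fixes y :: "nat \<Rightarrow> nat \<Rightarrow> 'p::prime_card mod_ring ^ 'n::finite"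
    and f :: "'p mod_ring ^ 'n \<Rightarrow> 'p mod_ring"
    and K :: nat and M :: "('p mod_ring ^ 'n) set"
  assumes "K \<ge> 1"
    and "M = {x. \<forall>i\<in>{1..CARD('p) - 1}. \<forall>j\<in>{1..K}. vinner (vpow x i) (y i j) = 0}"
    and "\<exists>c. \<forall>x\<in>M. f x = c"
  shows "gowers_norm CARD('p) f \<ge> (real (card M) / real CARD('p) ^ CARD('n)) ^ 2"
proof -
  obtain c where fc: "\<And>x. x \<in> M \<Longrightarrow> f x = c" using assms(3) by blast
  define p where "p = CARD('p)"
  have p2: "p \<ge> 2" unfolding p_def using prime_card[where 'a='p] prime_ge_2_nat by blast
  define I where "I = {1..p - 1} \<times> {1..K}"
  have finI: "finite I" unfolding I_def by simp
  define T where "T q x = vinner (vpow x (fst q)) (y (fst q) (snd q))" for q x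
  define \<psi> where "\<psi> a x = (\<Sum>q\<in>I. a q * T q x)" for a :: "nat \<times> nat \<Rightarrow> 'p mod_ring" and x
  define A where "A = PiE I (\<lambda>_. UNIV :: 'p mod_ring set)"
  have finA: "finite A" unfolding A_def using finI by (simp add: finite_PiE)
  have cardA: "card A = p ^ card I" unfolding A_def p_def using finI by (simp add: card_PiE)
  have Mchar: "x \<in> M \<longleftrightarrow> (\<forall>q\<in>I. T q x = 0)" for x
    unfolding assms(2) I_def T_def p_def by auto
  have deg: "lowdeg (p - 1) (\<psi> a)" for a
  proof -
    have eq: "\<psi> a = (\<lambda>x. \<Sum>q\<in>I. a q * (\<Sum>t\<in>UNIV. y (fst q) (snd q) $ t * (x $ t) ^ fst q))"
      unfolding \<psi>_def T_def vinner_def vpow_def by (simp add: mult.commute)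
    show ?thesis unfolding eq
    proof (intro lowdeg_sum lowdeg_cmult)
      fix q t assume "q \<in> I"
      then have "fst q \<le> p - 1" unfolding I_def by auto
      then show "lowdeg (p - 1) (\<lambda>x::'p mod_ring ^ 'n. (x $ t) ^ fst q)"
        using lowdeg_monomial lowdeg_mono by blast
    qed
  qed
  have charsum: "(\<Sum>a\<in>A. echar (\<psi> a x)) = (if x \<in> M then of_nat (p ^ card I) else 0)" for x
  proof -
    have "(\<Sum>a\<in>A. echar (\<psi> a x)) = (\<Sum>a\<in>A. \<Prod>q\<in>I. echar (a q * T q x))"
      unfolding \<psi>_def using finI by (simp add: echar_sum)
    also have "\<dots> = (\<Prod>q\<in>I. \<Sum>b\<in>UNIV. echar (b * T q x))"
      unfolding A_def using finI by (subst prod_sum_PiE) auto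
    also have "\<dots> = (\<Prod>q\<in>I. if T q x = 0 then of_nat p else 0)"
      unfolding echar_orth p_def ..
    also have "\<dots> = (if x \<in> M then of_nat (p ^ card I) else 0)"
    proof (cases "x \<in> M")
      case True then show ?thesis using Mchar by simp
    next
      case False
      then obtain q where "q \<in> I" "T q x \<noteq> 0" using Mchar by blast
      then show ?thesis using False finI by (intro trans[OF prod_zero]) auto
    qed
    finally show ?thesis .
  qed
  define S where "S a = (\<Sum>x\<in>UNIV. echar (f x + \<psi> a x))" for a
  have totsum: "(\<Sum>a\<in>A. S a) = echar c * of_nat (card M) * of_nat (p ^ card I)"
  proof -
    have "(\<Sum>a\<in>A. S a) = (\<Sum>x\<in>UNIV. echar (f x) * (\<Sum>a\<in>A. echar (\<psi> a x)))"
      unfolding S_def by (subst sum.swap) (simp add: echar_add sum_distrib_left)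
    also have "\<dots> = (\<Sum>x\<in>UNIV. if x \<in> M then echar c * of_nat (p ^ card I) else 0)"
      unfolding charsum using fc by (intro sum.cong) auto
    also have "\<dots> = (\<Sum>x\<in>M. echar c * of_nat (p ^ card I))"
      by (simp add: sum.If_cases)
    also have "\<dots> = echar c * of_nat (card M) * of_nat (p ^ card I)" by simp
    finally show ?thesis .
  qed
  have "\<exists>a\<in>A. cmod (S a) \<ge> real (card M)"
  proof (rule ccontr)
    assume "\<not> ?thesis"
    then have lt: "\<And>a. a \<in> A \<Longrightarrow> cmod (S a) < real (card M)" by auto
    have "A \<noteq> {}" unfolding A_def by (simp add: PiE_eq_empty_iff)
    then have "(\<Sum>a\<in>A. cmod (S a)) < (\<Sum>a\<in>A. real (card M))"
      using finA lt by (intro sum_strict_mono) auto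
    also have "\<dots> = real (card M) * real (p ^ card I)" using cardA by simp
    also have "\<dots> = cmod (\<Sum>a\<in>A. S a)" unfolding totsum
      by (simp add: norm_mult norm_echar norm_power)
    also have "\<dots> \<le> (\<Sum>a\<in>A. cmod (S a))" by (rule norm_sum)
    finally show False by simp
  qed
  then obtain a where aA: "a \<in> A" and Sa: "cmod (S a) \<ge> real (card M)" by blast
  define g where "g x = f x + \<psi> a x" for x
  define V where "V = real (CARD('p mod_ring ^ 'n))"
  have V: "V = real p ^ CARD('n)" unfolding V_def p_def by simp
  have Vpos: "V > 0" unfolding V_def by simp
  define d where "d = real (card M) / real CARD('p) ^ CARD('n)"
  have d0: "d \<ge> 0" unfolding d_def by simp
  have d1: "d \<le> 1"
  proof -
    have "card M \<le> CARD('p mod_ring ^ 'n)" by (rule card_mono) auto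
    then show ?thesis unfolding d_def using Vpos V_def by (simp add: V[unfolded p_def] field_simps)
  qed
  have "cmod (gowers_avg 0 g) = cmod (S a) / V"
    unfolding avg_0 S_def g_def V_def by (simp add: norm_divide norm_power)
  then have g0: "cmod (gowers_avg 0 g) \<ge> d"
    using Sa Vpos unfolding d_def V[unfolded p_def] by (simp add: divide_right_mono)
  have pS: "CARD('p) = Suc (p - 1)" using p2 unfolding p_def by simp
  have "gowers_avg CARD('p) f = gowers_avg CARD('p) g"
    unfolding pS g_def using avg_shift[OF deg[of a], of f] by simp
  then have ReG: "Re (gowers_avg CARD('p) f) \<ge> d ^ (2 ^ CARD('p))"
    using avg_pow_Re[of g "p - 1"] g0 d0 pS
    by (metis (no_types, lifting) order_trans power_mono zero_le_power)
  have "d = (d ^ (2 ^ CARD('p))) powr (1 / 2 ^ CARD('p))"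
    using powr_pow_root[OF d0, of "2 ^ CARD('p)"] by simp
  also have "\<dots> \<le> gowers_norm CARD('p) f"
    unfolding gowers_norm_def using ReG d0 by (intro powr_mono2) auto
  finally have "d \<le> gowers_norm CARD('p) f" .
  moreover have "d ^ 2 \<le> d" using d0 d1 by (simp add: power2_eq_square mult_left_le)
  ultimately show ?thesis unfolding d_def by linarith
qed

end
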